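(* Let $\alpha\ge-1$ and $A\subseteq\mathbb{N}$. Then the set of all cluster points of the sequence $\left(\frac{A_\alpha(n)}{\mathbb{N}_\alpha(n)}\right)_{n\ge1}$ is the whole interval $[\underline{d}_\alpha(A),\overline{d}_\alpha(A)]$.
   Context: $\mathbb{N}=\{1,2,3,\dots\}$. For $\alpha\ge-1$ and $A\subseteq\mathbb{N}$ put $A_\alpha(n)=\sum_{k=1}^n\chi_A(k)k^\alpha$ (so $\mathbb{N}_\alpha(n)=\sum_{k=1}^nk^\alpha$), $\underline{d}_\alpha(A)=\liminf_{n\to\infty}\frac{A_\alpha(n)}{\mathbb{N}_\alpha(n)}$ and $\overline{d}_\alpha(A)=\limsup_{n\to\infty}\frac{A_\alpha(n)}{\mathbb{N}_\alpha(n)}$. *)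

theory Defs
  imports "HOL-Analysis.Analysis"
begin

definition wcount :: "real \<Rightarrow> nat set \<Rightarrow> nat \<Rightarrow> real" where
  "wcount \<alpha> A n = (\<Sum>k\<in>{1..n}. (if k \<in> A then real k powr \<alpha> else 0))"

definition wratio :: "real \<Rightarrow> nat set \<Rightarrow> nat \<Rightarrow> real" where
  "wratio \<alpha> A n = wcount \<alpha> A n / wcount \<alpha> UNIV n"

definition lower_dens :: "real \<Rightarrow> nat set \<Rightarrow> ereal" where
  "lower_dens \<alpha> A = liminf (\<lambda>n. ereal (wratio \<alpha> A n))"

definition upper_dens :: "real \<Rightarrow> nat set \<Rightarrow> ereal" where
  "upper_dens \<alpha> A = limsup (\<lambda>n. ereal (wratio \<alpha> A n))"

definition cluster_point :: "(nat \<Rightarrow> real) \<Rightarrow> real \<Rightarrow> bool" where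
  "cluster_point x L \<longleftrightarrow> (\<forall>\<epsilon>>0. \<forall>N. \<exists>n\<ge>N. \<bar>x n - L\<bar> < \<epsilon>)"

end

theory Submission
  imports Defs
begin

lemma cross:
  fixes x :: "nat \<Rightarrow> real"
  assumes "m \<le> n" "x m \<le> c" "x n > c"
    and "\<forall>k. m \<le> k \<longrightarrow> k < n \<longrightarrow> \<bar>x (Suc k) - x k\<bar> < e"
  shows "\<exists>k. m < k \<and> k \<le> n \<and> c < x k \<and> x k < c + e"
  using assms
proof (induction n)
  case 0
  then show ?case by auto
next
  case (Suc n)
  show ?case
  proof (cases "x n > c")
    case True
    have "m \<noteq> Suc n" using Suc.prems by auto
    hence "m \<le> n" using Suc.prems by auto
    from Suc.IH[OF this Suc.prems(2) True] Suc.prems(4) obtain k where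
      "m < k \<and> k \<le> n \<and> c < x k \<and> x k < c + e" by auto
    then show ?thesis by (intro exI[of _ k]) auto
  next
    case False
    have "m \<noteq> Suc n" using Suc.prems by auto
    hence "m \<le> n" using Suc.prems by auto
    hence "\<bar>x (Suc n) - x n\<bar> < e" using Suc.prems(4) by auto
    hence "x (Suc n) < c + e" using False by auto
    moreover have "m < Suc n" using \<open>m \<le> n\<close> by auto
    ultimately show ?thesis using Suc.prems(3) by (intro exI[of _ "Suc n"]) auto
  qed
qed

lemma cluster_imp:
  fixes x :: "nat \<Rightarrow> real"
  assumes "cluster_point x L"
  shows "liminf (\<lambda>n. ereal (x n)) \<le> ereal L" "ereal L \<le> limsup (\<lambda>n. ereal (x n))"
proof -
  show "liminf (\<lambda>n. ereal (x n)) \<le> ereal L"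
    unfolding liminf_SUP_INF
  proof (rule dense_ge)
    fix y assume "ereal L < y"
    then obtain r where r: "ereal L < ereal r" "ereal r < y" using ereal_dense2 by blast
    show "(SUP n. INF m\<in>{n..}. ereal (x m)) \<le> y"
    proof (rule SUP_least)
      fix N :: nat
      have "r - L > 0" using r by auto
      then obtain n where "n \<ge> N" "\<bar>x n - L\<bar> < r - L"
        using assms unfolding cluster_point_def by blast
      hence "ereal (x n) < ereal r" by auto
      hence "ereal (x n) < y" using r(2) by (rule less_trans)
      hence "(INF m\<in>{N..}. ereal (x m)) < y" using \<open>n \<ge> N\<close>
        by (auto simp: INF_less_iff)
      thus "(INF m\<in>{N..}. ereal (x m)) \<le> y" by simp
    qed
  qed
  show "ereal L \<le> limsup (\<lambda>n. ereal (x n))"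
    unfolding limsup_INF_SUP
  proof (rule dense_le)
    fix y assume "y < ereal L"
    then obtain r where r: "y < ereal r" "ereal r < ereal L" using ereal_dense2 by blast
    show "y \<le> (INF n. SUP m\<in>{n..}. ereal (x m))"
    proof (rule INF_greatest)
      fix N :: nat
      have "L - r > 0" using r by auto
      then obtain n where "n \<ge> N" "\<bar>x n - L\<bar> < L - r"
        using assms unfolding cluster_point_def by blast
      hence "ereal r < ereal (x n)" by auto
      hence "y < ereal (x n)" using r(1) by (metis less_trans)
      hence "y < (SUP m\<in>{N..}. ereal (x m))" using \<open>n \<ge> N\<close>
        by (auto simp: less_SUP_iff)
      thus "y \<le> (SUP m\<in>{N..}. ereal (x m))" by simp
    qed
  qed
qed

lemma imp_cluster:
  fixes x :: "nat \<Rightarrow> real"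
  assumes step: "\<And>e. e > 0 \<Longrightarrow> \<exists>M. \<forall>n\<ge>M. \<bar>x (Suc n) - x n\<bar> < e"
    and lo: "liminf (\<lambda>n. ereal (x n)) \<le> ereal L"
    and hi: "ereal L \<le> limsup (\<lambda>n. ereal (x n))"
  shows "cluster_point x L"
  unfolding cluster_point_def
proof (intro allI impI)
  fix e :: real and N :: nat
  assume e: "e > 0"
  obtain M0 where M0: "\<forall>n\<ge>M0. \<bar>x (Suc n) - x n\<bar> < e" using step[OF e] by blast
  define M where "M = max M0 N"
  have "(INF m\<in>{M..}. ereal (x m)) \<le> liminf (\<lambda>n. ereal (x n))"
    unfolding liminf_SUP_INF by (rule SUP_upper) auto
  also have "\<dots> < ereal (L + e)" using lo e by (simp add: le_less_trans)
  finally obtain n1 where n1: "n1 \<ge> M" "x n1 < L + e" by (auto simp: INF_less_iff)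
  have "ereal (L - e) < ereal L" using e by simp
  also have "\<dots> \<le> limsup (\<lambda>n. ereal (x n))" using hi .
  also have "\<dots> \<le> (SUP m\<in>{M..}. ereal (x m))"
    unfolding limsup_INF_SUP by (rule INF_lower) auto
  finally obtain n2 where n2: "n2 \<ge> M" "x n2 > L - e" by (auto simp: less_SUP_iff)
  show "\<exists>n\<ge>N. \<bar>x n - L\<bar> < e"
  proof (cases "\<bar>x n1 - L\<bar> < e \<or> \<bar>x n2 - L\<bar> < e")
    case True
    then show ?thesis using n1 n2 M_def by auto
  next
    case False
    hence a: "x n1 \<le> L - e" and b: "x n2 \<ge> L + e" using n1 n2 by auto
    show ?thesis
    proof (cases "n1 \<le> n2")
      case True
      have "\<exists>k. n1 < k \<and> k \<le> n2 \<and> L - e < x k \<and> x k < L - e + e"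
        by (rule cross[of n1 n2 x, OF True a]) (use b e M0 n1 M_def in auto)
      then obtain k where "n1 < k" "L - e < x k" "x k < L" by auto
      then show ?thesis using n1 M_def by (intro exI[of _ k]) auto
    next
      case False
      hence le: "n2 \<le> n1" by auto
      have "\<exists>k. n2 < k \<and> k \<le> n1 \<and> -L - e < - x k \<and> - x k < -L - e + e"
        by (rule cross[of n2 n1 "\<lambda>k. - x k", OF le]) (use a b e M0 n2 M_def in \<open>auto simp: abs_minus_commute\<close>)
      then obtain k where "n2 < k" "L < x k" "x k < L + e" by auto
      then show ?thesis using n2 M_def by (intro exI[of _ k]) auto
    qed
  qed
qed

lemma wcount_Suc:
  "wcount a A (Suc n) = wcount a A n + (if Suc n \<in> A then real (Suc n) powr a else 0)"
  by (simp add: wcount_def)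

lemma wcount_nonneg: "0 \<le> wcount a A n"
  unfolding wcount_def by (rule sum_nonneg) auto

lemma wcount_le: "wcount a A n \<le> wcount a UNIV n"
  unfolding wcount_def by (rule sum_mono) auto

lemma S_lower:
  assumes "m \<ge> 1"
  shows "real m * real m powr a \<le> max 1 (2 powr (a+1)) * wcount a UNIV m"
proof (cases "a \<ge> 0")
  case True
  have sub: "{m - m div 2..m} \<subseteq> {1..m}" using assms by auto
  have "(\<Sum>k\<in>{m - m div 2..m}. (real m / 2) powr a) \<le> (\<Sum>k\<in>{m - m div 2..m}. real k powr a)"
  proof (rule sum_mono)
    fix k assume "k \<in> {m - m div 2..m}"
    hence "real m / 2 \<le> real k" by auto
    thus "(real m / 2) powr a \<le> real k powr a" using True by (intro powr_mono2) auto
  qed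
  also have "\<dots> \<le> (\<Sum>k\<in>{1..m}. real k powr a)"
    by (rule sum_mono2[OF _ sub]) auto
  also have "\<dots> = wcount a UNIV m" by (simp add: wcount_def)
  finally have 1: "real (m div 2 + 1) * (real m / 2) powr a \<le> wcount a UNIV m"
    using assms by (simp add: Suc_diff_le)
  have "real m / 2 \<le> real (m div 2 + 1)" by linarith
  hence "(real m / 2) * (real m / 2) powr a \<le> real (m div 2 + 1) * (real m / 2) powr a"
    by (intro mult_right_mono) auto
  also note 1
  finally have 2: "(real m / 2) * (real m / 2) powr a \<le> wcount a UNIV m" .
  have p: "2 powr a > 0" by simp
  have "(real m / 2) powr a = real m powr a / 2 powr a" by (simp add: powr_divide)
  hence "(real m / 2) * (real m / 2) powr a = real m * real m powr a / (2 * 2 powr a)"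
    by simp
  with 2 have "real m * real m powr a / (2 * 2 powr a) \<le> wcount a UNIV m" by (metis mult.commute)
  hence "real m * real m powr a \<le> (2 * 2 powr a) * wcount a UNIV m"
    using p by (simp add: divide_le_eq mult.commute)
  also have "2 * 2 powr a = 2 powr (a+1)" by (simp add: powr_add)
  finally have "real m * real m powr a \<le> 2 powr (a+1) * wcount a UNIV m" .
  also have "\<dots> \<le> max 1 (2 powr (a+1)) * wcount a UNIV m"
    by (intro mult_right_mono) (auto simp: wcount_nonneg)
  finally show ?thesis .
next
  case False
  have "(\<Sum>k\<in>{1..m}. real m powr a) \<le> (\<Sum>k\<in>{1..m}. real k powr a)"
  proof (rule sum_mono)
    fix k assume "k \<in> {1..m}"
    thus "real m powr a \<le> real k powr a" using False by (intro powr_mono2') auto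
  qed
  hence "real m * real m powr a \<le> wcount a UNIV m" by (simp add: wcount_def)
  also have "\<dots> \<le> max 1 (2 powr (a+1)) * wcount a UNIV m"
    using mult_right_mono[of 1 "max 1 (2 powr (a+1))" "wcount a UNIV m"] by (simp add: wcount_nonneg)
  finally show ?thesis by simp
qed

lemma step_real:
  fixes a b w c :: real
  assumes "0 \<le> a" "a \<le> b" "0 < w" "c = 0 \<or> c = w"
  shows "\<bar>(a + c) / (b + w) - a / b\<bar> \<le> w / (b + w)"
proof (cases "b = 0")
  case True
  then show ?thesis using assms by auto
next
  case False
  hence b: "b > 0" using assms by auto
  have "(a + c) / (b + w) - a / b = (c * b - a * w) / (b * (b + w))"
    using b assms by (simp add: field_simps)
  also have "\<bar>\<dots>\<bar> = \<bar>c * b - a * w\<bar> / (b * (b + w))" using b assms by simp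
  also have "\<dots> \<le> (w * b) / (b * (b + w))"
  proof (intro divide_right_mono)
    have "a * w \<le> b * w" "0 \<le> a * w" using assms by (auto intro: mult_right_mono)
    thus "\<bar>c * b - a * w\<bar> \<le> w * b" using assms(4) by (auto simp: abs_le_iff algebra_simps)
  qed (use b assms in auto)
  also have "\<dots> = w / (b + w)" using b by simp
  finally show ?thesis .
qed

lemma diff_bound:
  "\<bar>wratio a A (Suc n) - wratio a A n\<bar> \<le> max 1 (2 powr (a+1)) / real (Suc n)"
proof -
  define w where "w = real (Suc n) powr a"
  define S where "S = wcount a UNIV n"
  define T where "T = wcount a A n"
  have w: "w > 0" by (simp add: w_def)
  have "\<bar>wratio a A (Suc n) - wratio a A n\<bar>
     = \<bar>(T + (if Suc n \<in> A then w else 0)) / (S + w) - T / S\<bar>"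
    unfolding wratio_def wcount_Suc[of a A] wcount_Suc[of a UNIV] by (simp add: w_def S_def T_def)
  also have "\<dots> \<le> w / (S + w)"
    by (rule step_real) (auto simp: T_def S_def wcount_nonneg wcount_le w)
  also have "\<dots> \<le> max 1 (2 powr (a+1)) / real (Suc n)"
  proof -
    have "S + w = wcount a UNIV (Suc n)" by (simp add: wcount_Suc S_def w_def)
    moreover have "S + w > 0" using w by (simp add: S_def wcount_nonneg add_nonneg_pos)
    ultimately have "real (Suc n) * w \<le> max 1 (2 powr (a+1)) * (S + w)"
      using S_lower[of "Suc n" a] by (simp add: w_def)
    thus ?thesis using \<open>S + w > 0\<close> by (simp add: field_simps)
  qed
  finally show ?thesis .
qed

lemma diff_small:
  assumes "e > 0"
  shows "\<exists>M. \<forall>n\<ge>M. \<bar>wratio a A (Suc n) - wratio a A n\<bar> < e"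
proof -
  define C where "C = max 1 (2 powr (a+1))"
  have C: "C > 0" by (simp add: C_def)
  obtain M :: nat where M: "C / e < real M" using reals_Archimedean2 by blast
  have "\<forall>n\<ge>M. \<bar>wratio a A (Suc n) - wratio a A n\<bar> < e"
  proof (intro allI impI)
    fix n assume "n \<ge> M"
    hence "C / e < real (Suc n)" using M by linarith
    hence "C < e * real (Suc n)" using assms by (simp add: field_simps)
    hence "C / real (Suc n) < e" by (simp add: field_simps)
    thus "\<bar>wratio a A (Suc n) - wratio a A n\<bar> < e"
      using diff_bound[of a A n] unfolding C_def by linarith
  qed
  thus ?thesis by blast
qed

theorem lemma4p1:
  fixes \<alpha> :: real and A :: "nat set"
  assumes "\<alpha> \<ge> -1"
  shows "{L. cluster_point (wratio \<alpha> A) L} =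
         {L. lower_dens \<alpha> A \<le> ereal L \<and> ereal L \<le> upper_dens \<alpha> A}"
  unfolding lower_dens_def upper_dens_def
  using cluster_imp[of "wratio \<alpha> A"] imp_cluster[of "wratio \<alpha> A", OF diff_small]
  by blast

end
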